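(* Let $\mathcal{S}$ be a periodic symbol sequence of period $n$. Suppose $I-M_{\mathcal{S}^{\overline0}}$ is nonsingular, $I-M_{\mathcal{S}}$ and $P_{\mathcal{S}}$ are singular, $\mu\ne0$, and $\varrho^{\mathsf T}B\ne0$. Then $P_{\mathcal{S}^{(i)}}$ is singular for all $i$.
   Context: $A_L,A_R$ are real $N\times N$ matrices ($N\ge2$) with $A_R=A_L+Ce_1^{\mathsf T}$ for some $C\in\mathbb{R}^N$; $B\in\mathbb{R}^N$, $\mu\in\mathbb{R}$; $\varrho^{\mathsf T}=e_1^{\mathsf T}\mathrm{adj}(I-A_L)$. A periodic sequence $\mathcal{S}:\mathbb{Z}\to\{L,R\}$ of period $n$ is identified with $\mathcal{S}_0\cdots\mathcal{S}_{n-1}$; $\mathcal{S}^{(i)}_j=\mathcal{S}_{i+j}$; $\mathcal{S}^{\overline0}$ differs from $\mathcal{S}$ exactly at indices $\equiv0\pmod n$. $M_{\mathcal{S}}=A_{\mathcal{S}_{n-1}}\cdots A_{\mathcal{S}_0}$ and $P_{\mathcal{S}}=I+A_{\mathcal{S}_{n-1}}+A_{\mathcal{S}_{n-1}}A_{\mathcal{S}_{n-2}}+\cdots+A_{\mathcal{S}_{n-1}}\cdots A_{\mathcal{S}_1}$. *)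

theory Defs
  imports "Jordan_Normal_Form.Determinant"
begin

datatype side = L | R

fun other :: "side \<Rightarrow> side" where
  "other L = R" | "other R = L"

definition Amat :: "'a mat \<Rightarrow> 'a mat \<Rightarrow> side \<Rightarrow> 'a mat" where
  "Amat AL AR s = (case s of L \<Rightarrow> AL | R \<Rightarrow> AR)"

fun prodseq :: "nat \<Rightarrow> real mat \<Rightarrow> real mat \<Rightarrow> (int \<Rightarrow> side) \<Rightarrow> nat \<Rightarrow> real mat" where
  "prodseq N AL AR S 0 = 1\<^sub>m N"
| "prodseq N AL AR S (Suc k) = Amat AL AR (S (int k)) * prodseq N AL AR S k"

definition Mmat :: "nat \<Rightarrow> real mat \<Rightarrow> real mat \<Rightarrow> (int \<Rightarrow> side) \<Rightarrow> nat \<Rightarrow> real mat" where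
  "Mmat N AL AR S n = prodseq N AL AR S n"

fun tailprod :: "nat \<Rightarrow> real mat \<Rightarrow> real mat \<Rightarrow> (int \<Rightarrow> side) \<Rightarrow> nat \<Rightarrow> nat \<Rightarrow> real mat" where
  "tailprod N AL AR S n 0 = 1\<^sub>m N"
| "tailprod N AL AR S n (Suc j) = tailprod N AL AR S n j * Amat AL AR (S (int n - 1 - int j))"

fun Psum :: "nat \<Rightarrow> real mat \<Rightarrow> real mat \<Rightarrow> (int \<Rightarrow> side) \<Rightarrow> nat \<Rightarrow> nat \<Rightarrow> real mat" where
  "Psum N AL AR S n 0 = 0\<^sub>m N N"
| "Psum N AL AR S n (Suc k) = Psum N AL AR S n k + tailprod N AL AR S n k"

text \<open>P_S = I + A_{S_{n-1}} + A_{S_{n-1}} A_{S_{n-2}} + ... + A_{S_{n-1}} ... A_{S_1}\<close>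
definition Pmat :: "nat \<Rightarrow> real mat \<Rightarrow> real mat \<Rightarrow> (int \<Rightarrow> side) \<Rightarrow> nat \<Rightarrow> real mat" where
  "Pmat N AL AR S n = Psum N AL AR S n n"

definition shift :: "(int \<Rightarrow> side) \<Rightarrow> int \<Rightarrow> (int \<Rightarrow> side)" where
  "shift S i = (\<lambda>j. S (i + j))"

definition flip0 :: "nat \<Rightarrow> (int \<Rightarrow> side) \<Rightarrow> (int \<Rightarrow> side)" where
  "flip0 n S = (\<lambda>j. if j mod int n = 0 then other (S j) else S j)"

end

theory Submission
  imports Defs
begin

lemma Amat_carrier[simp]: "AL \<in> carrier_mat N N \<Longrightarrow> AR \<in> carrier_mat N N \<Longrightarrow> Amat AL AR s \<in> carrier_mat N N"
  by (cases s) (auto simp: Amat_def)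

lemma tailprod_carrier[simp]: "AL \<in> carrier_mat N N \<Longrightarrow> AR \<in> carrier_mat N N \<Longrightarrow> tailprod N AL AR S n j \<in> carrier_mat N N"
  by (induction j) auto

lemma prodseq_carrier[simp]: "AL \<in> carrier_mat N N \<Longrightarrow> AR \<in> carrier_mat N N \<Longrightarrow> prodseq N AL AR S k \<in> carrier_mat N N"
proof (induction k)
  case (Suc k)
  then show ?case using mult_carrier_mat[OF Amat_carrier[OF Suc(2,3)] Suc(1)[OF Suc(2,3)]] by simp
qed simp

lemma Psum_carrier[simp]: "AL \<in> carrier_mat N N \<Longrightarrow> AR \<in> carrier_mat N N \<Longrightarrow> Psum N AL AR S n k \<in> carrier_mat N N"
  by (induction k) auto

lemma dims[simp]:
  assumes "AL \<in> carrier_mat N N" "AR \<in> carrier_mat N N"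
  shows "dim_row (Amat AL AR s) = N" "dim_col (Amat AL AR s) = N"
   "dim_row (tailprod N AL AR S n j) = N" "dim_col (tailprod N AL AR S n j) = N"
   "dim_row (prodseq N AL AR S k) = N" "dim_col (prodseq N AL AR S k) = N"
   "dim_row (Psum N AL AR S n k) = N" "dim_col (Psum N AL AR S n k) = N"
  by (simp_all only: carrier_matD[OF Amat_carrier[OF assms]] carrier_matD[OF tailprod_carrier[OF assms]]
      carrier_matD[OF prodseq_carrier[OF assms]] carrier_matD[OF Psum_carrier[OF assms]])

lemma Mmat_carrier[simp]: "AL \<in> carrier_mat N N \<Longrightarrow> AR \<in> carrier_mat N N \<Longrightarrow> Mmat N AL AR S n \<in> carrier_mat N N"
  unfolding Mmat_def by (rule prodseq_carrier)

lemma Pmat_carrier[simp]: "AL \<in> carrier_mat N N \<Longrightarrow> AR \<in> carrier_mat N N \<Longrightarrow> Pmat N AL AR S n \<in> carrier_mat N N"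
  unfolding Pmat_def by (rule Psum_carrier)

lemma one_minus_carrier[simp]: "X \<in> carrier_mat N N \<Longrightarrow> 1\<^sub>m N - X \<in> carrier_mat N N"
  by (rule minus_carrier_mat)

lemma tailprod_Suc_left:
  assumes "AL \<in> carrier_mat N N" "AR \<in> carrier_mat N N"
  shows "tailprod N AL AR T (Suc m) (Suc j) = Amat AL AR (T (int m)) * tailprod N AL AR T m j"
proof (induction j)
  case 0 then show ?case using assms by simp
next
  case (Suc j)
  have e: "int (Suc m) - 1 - int (Suc j) = int m - 1 - int j" by simp
  have "tailprod N AL AR T (Suc m) (Suc (Suc j)) = tailprod N AL AR T (Suc m) (Suc j) * Amat AL AR (T (int m - 1 - int j))"
    by (simp only: tailprod.simps e)
  also have "\<dots> = Amat AL AR (T (int m)) * tailprod N AL AR T m j * Amat AL AR (T (int m - 1 - int j))"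
    using Suc by simp
  also have "\<dots> = Amat AL AR (T (int m)) * tailprod N AL AR T m (Suc j)"
    using assms by (simp add: assoc_mult_mat[of _ N N _ N _ N])
  finally show ?case .
qed

lemma prodseq_tailprod:
  assumes "AL \<in> carrier_mat N N" "AR \<in> carrier_mat N N"
  shows "prodseq N AL AR T k = tailprod N AL AR T k k"
proof (induction k)
  case (Suc k)
  then show ?case by (simp only: prodseq.simps tailprod_Suc_left[OF assms])
qed simp

lemma tailprod_cong:
  "(\<And>i. i < j \<Longrightarrow> T1 (int n - 1 - int i) = T2 (int n - 1 - int i)) \<Longrightarrow> tailprod N AL AR T1 n j = tailprod N AL AR T2 n j"
  by (induction j) auto

lemma tailprod_shift1: "tailprod N AL AR (shift T 1) n j = tailprod N AL AR T (Suc n) j"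
  by (induction j) (auto simp: shift_def algebra_simps)

lemma Psum_shift1: "Psum N AL AR (shift T 1) n j = Psum N AL AR T (Suc n) j"
  by (induction j) (auto simp: tailprod_shift1)

lemma Psum_Suc_left:
  assumes "AL \<in> carrier_mat N N" "AR \<in> carrier_mat N N"
  shows "Psum N AL AR T (Suc m) (Suc k) = 1\<^sub>m N + Amat AL AR (T (int m)) * Psum N AL AR T m k"
proof (induction k)
  case 0 then show ?case using assms by simp
next
  case (Suc k)
  have "Psum N AL AR T (Suc m) (Suc (Suc k)) = Psum N AL AR T (Suc m) (Suc k) + tailprod N AL AR T (Suc m) (Suc k)"
    by (simp only: Psum.simps)
  also have "\<dots> = 1\<^sub>m N + Amat AL AR (T (int m)) * Psum N AL AR T m k + Amat AL AR (T (int m)) * tailprod N AL AR T m k"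
    by (simp only: Suc tailprod_Suc_left[OF assms])
  also have "\<dots> = 1\<^sub>m N + Amat AL AR (T (int m)) * Psum N AL AR T m (Suc k)"
    using assms by (simp only: Psum.simps mult_add_distrib_mat[OF Amat_carrier[OF assms] Psum_carrier[OF assms] tailprod_carrier[OF assms]]
        assoc_add_mat[OF one_carrier_mat mult_carrier_mat[OF Amat_carrier[OF assms] Psum_carrier[OF assms]] mult_carrier_mat[OF Amat_carrier[OF assms] tailprod_carrier[OF assms]]])
  finally show ?case .
qed

definition agree :: "nat \<Rightarrow> real mat \<Rightarrow> real mat \<Rightarrow> bool" where
  "agree N X Y \<longleftrightarrow> (\<forall>i<N. \<forall>j<N. j \<noteq> 0 \<longrightarrow> X $$ (i,j) = Y $$ (i,j))"

lemma agree_refl: "agree N X X" by (simp add: agree_def)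
lemma agree_sym: "agree N X Y \<Longrightarrow> agree N Y X" by (simp add: agree_def)
lemma agree_trans: "agree N X Y \<Longrightarrow> agree N Y Z \<Longrightarrow> agree N X Z" by (simp add: agree_def)

lemma agree_mult:
  assumes "Q \<in> carrier_mat N N" "X \<in> carrier_mat N N" "Y \<in> carrier_mat N N" "agree N X Y"
  shows "agree N (Q * X) (Q * Y)"
  unfolding agree_def
proof (intro allI impI)
  fix i j assume ij: "i < N" "j < N" "j \<noteq> 0"
  have "col X j = col Y j"
    using assms ij unfolding agree_def by (intro eq_vecI) auto
  then show "(Q * X) $$ (i, j) = (Q * Y) $$ (i, j)" using assms ij by simp
qed

lemma agree_add:
  assumes "X \<in> carrier_mat N N" "Y \<in> carrier_mat N N" "X' \<in> carrier_mat N N" "Y' \<in> carrier_mat N N"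
    "agree N X Y" "agree N X' Y'"
  shows "agree N (X + X') (Y + Y')"
  using assms unfolding agree_def by auto

lemma agree_one_minus:
  assumes "X \<in> carrier_mat N N" "Y \<in> carrier_mat N N" "agree N X Y"
  shows "agree N (1\<^sub>m N - X) (1\<^sub>m N - Y)"
  using assms unfolding agree_def by auto

lemma agree_Amat:
  assumes "AL \<in> carrier_mat N N" "AR = AL + mat N N (\<lambda>(i, j). if j = 0 then C $ i else 0)"
  shows "agree N (Amat AL AR s) (Amat AL AR s')"
proof -
  have "agree N AL AR" using assms unfolding agree_def by auto
  then show ?thesis by (cases s; cases s') (auto simp: Amat_def agree_refl agree_sym)
qed

lemma telescope:
  assumes AL: "AL \<in> carrier_mat N N" and AR: "AR \<in> carrier_mat N N"
    and ag: "\<And>s. agree N AL (Amat AL AR s)"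
  shows "agree N (Psum N AL AR T n k * (1\<^sub>m N - AL)) (1\<^sub>m N - tailprod N AL AR T n k)"
proof (induction k)
  case 0
  then show ?case using AL by (simp add: agree_def)
next
  case (Suc k)
  let ?P = "Psum N AL AR T n k" and ?t = "tailprod N AL AR T n k" and ?A = "Amat AL AR (T (int n - 1 - int k))"
  have c: "?P \<in> carrier_mat N N" "?t \<in> carrier_mat N N" "?A \<in> carrier_mat N N" using AL AR by auto
  have e1: "Psum N AL AR T n (Suc k) * (1\<^sub>m N - AL) = ?P * (1\<^sub>m N - AL) + ?t * (1\<^sub>m N - AL)"
    by (simp only: Psum.simps add_mult_distrib_mat[OF c(1) c(2) minus_carrier_mat[OF AL]])
  have "agree N (?t * (1\<^sub>m N - AL)) (?t * (1\<^sub>m N - ?A))"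
    by (rule agree_mult[OF c(2) minus_carrier_mat[OF AL] minus_carrier_mat[OF c(3)] agree_one_minus[OF AL c(3) ag]])
  then have "agree N (?P * (1\<^sub>m N - AL) + ?t * (1\<^sub>m N - AL)) ((1\<^sub>m N - ?t) + ?t * (1\<^sub>m N - ?A))"
    by (rule agree_add[OF mult_carrier_mat[OF c(1) minus_carrier_mat[OF AL]] minus_carrier_mat[OF c(2)]
          mult_carrier_mat[OF c(2) minus_carrier_mat[OF AL]] mult_carrier_mat[OF c(2) minus_carrier_mat[OF c(3)]] Suc])
  moreover have "(1\<^sub>m N - ?t) + ?t * (1\<^sub>m N - ?A) = 1\<^sub>m N - tailprod N AL AR T n (Suc k)"
  proof -
    have "?t * (1\<^sub>m N - ?A) = ?t - ?t * ?A"
      using c by (simp add: mult_minus_distrib_mat[of _ N N _ N])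
    then show ?thesis using c by (intro eq_matI) auto
  qed
  ultimately show ?case using e1 by simp
qed


lemma inv_exists:
  assumes "K \<in> carrier_mat N N" "det K \<noteq> (0::real)"
  obtains J where "J \<in> carrier_mat N N" "J * K = 1\<^sub>m N" "K * J = 1\<^sub>m N"
proof -
  from det_non_zero_imp_unit[OF assms, of "()"]
  show ?thesis using that unfolding Units_def ring_mat_def by auto
qed

lemma base_range:
  fixes K K' P X :: "real mat"
  assumes K: "K \<in> carrier_mat N N" and K': "K' \<in> carrier_mat N N" and P: "P \<in> carrier_mat N N"
    and X: "X \<in> carrier_mat N N" and N: "N > 0" and agK: "agree N K K'" and dK': "det K' \<noteq> 0"
    and dP: "det P = 0" and agP: "agree N (P * X) K"
  shows "\<forall>b\<in>carrier_vec N. \<exists>x\<in>carrier_vec N. K *\<^sub>v x = P *\<^sub>v b"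
proof -
  obtain J where J: "J \<in> carrier_mat N N" "J * K' = 1\<^sub>m N" "K' * J = 1\<^sub>m N"
    using inv_exists[OF K' dK'] by blast
  define G where "G = J * P"
  have G: "G \<in> carrier_mat N N" using J P by (simp add: G_def)
  have "det G = 0" using det_mult[OF J(1) P] dP by (simp add: G_def)
  then have "det (transpose_mat G) = 0" using det_transpose[OF G] by simp
  then obtain z where z: "z \<in> carrier_vec N" "z \<noteq> 0\<^sub>v N" "transpose_mat G *\<^sub>v z = 0\<^sub>v N"
    using det_0_iff_vec_prod_zero[of "transpose_mat G" N] G by auto
  have agH: "agree N (G * X) (1\<^sub>m N)"
  proof -
    have "G * X = J * (P * X)" using J P X by (simp add: G_def)
    moreover have "agree N (J * (P * X)) (J * K)" using J P X K agP by (intro agree_mult) auto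
    moreover have "agree N (J * K) (J * K')" using J K K' agK by (intro agree_mult) auto
    ultimately show ?thesis using J(2) by (metis agree_trans)
  qed
  have HT: "transpose_mat (G * X) *\<^sub>v z = 0\<^sub>v N"
  proof -
    have "transpose_mat (G * X) = transpose_mat X * transpose_mat G"
      using transpose_mult[OF G X] .
    then have "transpose_mat (G * X) *\<^sub>v z = transpose_mat X *\<^sub>v (transpose_mat G *\<^sub>v z)"
      using G X z by simp
    also have "transpose_mat G *\<^sub>v z = 0\<^sub>v N" using z by simp
    also have "transpose_mat X *\<^sub>v 0\<^sub>v N = 0\<^sub>v N" using X by (intro eq_vecI) auto
    finally show ?thesis .
  qed
  have zj: "z $ j = 0" if j: "j < N" "j \<noteq> 0" for j
  proof -
    have "col (G * X) j = col (1\<^sub>m N) j"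
      using agH j G X unfolding agree_def by (intro eq_vecI) auto
    then have "(transpose_mat (G * X) *\<^sub>v z) $ j = unit_vec N j \<bullet> z"
      using j G X by simp
    also have "\<dots> = z $ j" using z j by simp
    finally show ?thesis using HT j by simp
  qed
  have z0: "z $ 0 \<noteq> 0"
  proof
    assume "z $ 0 = 0"
    have "z = 0\<^sub>v N"
    proof (rule eq_vecI)
      fix i assume "i < dim_vec (0\<^sub>v N)"
      then have i: "i < N" by simp
      show "z $ i = 0\<^sub>v N $ i" using \<open>z $ 0 = 0\<close> zj[OF i] i by (cases "i = 0") auto
    next
      show "dim_vec z = dim_vec (0\<^sub>v N)" using z by simp
    qed
    then show False using z by simp
  qed
  have zform: "z = z $ 0 \<cdot>\<^sub>v unit_vec N 0"
    using z zj N by (intro eq_vecI) (auto simp: unit_vec_def)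
  have G0: "G $$ (0, j) = 0" if j: "j < N" for j
  proof -
    have "0 = (transpose_mat G *\<^sub>v z) $ j" using z j by simp
    also have "\<dots> = col G j \<bullet> z" using G j by simp
    also have "\<dots> = col G j \<bullet> (z $ 0 \<cdot>\<^sub>v unit_vec N 0)"
      using zform by metis
    also have "\<dots> = z $ 0 * (col G j \<bullet> unit_vec N 0)"
      by (rule scalar_prod_smult_right) (use G in simp)
    also have "\<dots> = z $ 0 * G $$ (0, j)" using G j N by simp
    finally show ?thesis using z0 by simp
  qed
  show ?thesis
  proof
    fix b :: "real vec" assume b: "b \<in> carrier_vec N"
    define x where "x = G *\<^sub>v b"
    have x: "x \<in> carrier_vec N" using G b by (simp add: x_def)
    have x0: "x $ 0 = 0"
    proof -
      have "row G 0 = 0\<^sub>v N" using G0 G N by (intro eq_vecI) auto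
      then show ?thesis using G N b by (simp add: x_def)
    qed
    have "K *\<^sub>v x = K' *\<^sub>v x"
    proof (rule eq_vecI)
      fix i assume i: "i < dim_vec (K' *\<^sub>v x)"
      then have i: "i < N" using K' by simp
      have "row K i \<bullet> x = row K' i \<bullet> x"
        unfolding scalar_prod_def
        using x x0 K K' i agK unfolding agree_def
        by (intro sum.cong) auto
      then show "(K *\<^sub>v x) $ i = (K' *\<^sub>v x) $ i" using i K K' by simp
    qed (use K K' in simp)
    also have "K' *\<^sub>v x = K' *\<^sub>v (J *\<^sub>v (P *\<^sub>v b))"
      by (simp only: x_def G_def assoc_mult_mat_vec[OF J(1) P b])
    also have "\<dots> = (K' * J) *\<^sub>v (P *\<^sub>v b)"
      by (rule assoc_mult_mat_vec[OF K' J(1) mult_mat_vec_carrier[OF P b], symmetric])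
    also have "\<dots> = P *\<^sub>v b" using J P b by simp
    finally show "\<exists>x\<in>carrier_vec N. K *\<^sub>v x = P *\<^sub>v b" using x by blast
  qed
qed


lemma mult_zero_vec_c: "(A :: real mat) \<in> carrier_mat N N \<Longrightarrow> A *\<^sub>v 0\<^sub>v N = 0\<^sub>v N"
  by (intro eq_vecI) auto

lemma one_minus_mult_vec:
  fixes M :: "real mat"
  assumes "M \<in> carrier_mat N N" "v \<in> carrier_vec N"
  shows "(1\<^sub>m N - M) *\<^sub>v v = v - M *\<^sub>v v"
  using assms by (simp add: minus_mult_distrib_mat_vec[of "1\<^sub>m N :: real mat" N N M v])

lemma final_det:
  fixes K P :: "real mat"
  assumes K: "K \<in> carrier_mat N N" and P: "P \<in> carrier_mat N N"
    and ker: "\<exists>v\<in>carrier_vec N. v \<noteq> 0\<^sub>v N \<and> K *\<^sub>v v = 0\<^sub>v N"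
    and rng: "\<forall>b\<in>carrier_vec N. \<exists>x\<in>carrier_vec N. K *\<^sub>v x = P *\<^sub>v b"
  shows "det P = 0"
proof (rule ccontr)
  assume dP: "det P \<noteq> 0"
  obtain J where J: "J \<in> carrier_mat N N" "J * P = 1\<^sub>m N" "P * J = 1\<^sub>m N"
    using inv_exists[OF P dP] by blast
  have "det K = 0" using det_0_iff_vec_prod_zero[OF K] ker by auto
  then have "det (transpose_mat K) = 0" using det_transpose[OF K] by simp
  then obtain y where y: "y \<in> carrier_vec N" "y \<noteq> 0\<^sub>v N" "transpose_mat K *\<^sub>v y = 0\<^sub>v N"
    using det_0_iff_vec_prod_zero[of "transpose_mat K" N] K by auto
  have "J *\<^sub>v y \<in> carrier_vec N" using J y by simp
  then obtain x where x: "x \<in> carrier_vec N" "K *\<^sub>v x = P *\<^sub>v (J *\<^sub>v y)" using rng by blast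
  have "P *\<^sub>v (J *\<^sub>v y) = y" using J P y by (simp flip: assoc_mult_mat_vec)
  with x have Kx: "K *\<^sub>v x = y" by simp
  have "y \<bullet> y = y \<bullet> (K *\<^sub>v x)" by (simp add: Kx)
  also have "\<dots> = (transpose_mat K *\<^sub>v y) \<bullet> x" using transpose_vec_mult_scalar[OF K x(1) y(1)] by simp
  also have "\<dots> = 0" using y x by simp
  finally have yy: "(\<Sum>i\<in>{0..<N}. y $ i * y $ i) = 0" using y by (simp add: scalar_prod_def)
  have "\<forall>i\<in>{0..<N}. y $ i * y $ i = 0"
    using sum_nonneg_eq_0_iff[of "{0..<N}" "\<lambda>i. y $ i * y $ i"] yy by simp
  then have "y = 0\<^sub>v N" using y by (intro eq_vecI) auto
  then show False using y by simp
qed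

lemma shift_step:
  assumes AL: "AL \<in> carrier_mat N N" and AR: "AR \<in> carrier_mat N N" and n: "n \<ge> 1"
    and per: "T (int n) = T 0"
    and ker: "\<exists>v\<in>carrier_vec N. v \<noteq> 0\<^sub>v N \<and> (1\<^sub>m N - Mmat N AL AR T n) *\<^sub>v v = 0\<^sub>v N"
    and rng: "\<forall>b\<in>carrier_vec N. \<exists>x\<in>carrier_vec N. (1\<^sub>m N - Mmat N AL AR T n) *\<^sub>v x = Pmat N AL AR T n *\<^sub>v b"
  shows "(\<exists>v\<in>carrier_vec N. v \<noteq> 0\<^sub>v N \<and> (1\<^sub>m N - Mmat N AL AR (shift T 1) n) *\<^sub>v v = 0\<^sub>v N)
    \<and> (\<forall>b\<in>carrier_vec N. \<exists>x\<in>carrier_vec N. (1\<^sub>m N - Mmat N AL AR (shift T 1) n) *\<^sub>v x = Pmat N AL AR (shift T 1) n *\<^sub>v b)"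
proof -
  obtain m where m: "n = Suc m" using n by (cases n) auto
  define Q where "Q = tailprod N AL AR T n m"
  define A0 where "A0 = Amat AL AR (T 0)"
  define Ps where "Ps = Psum N AL AR T n m"
  have c: "Q \<in> carrier_mat N N" "A0 \<in> carrier_mat N N" "Ps \<in> carrier_mat N N"
    using AL AR by (auto simp: Q_def A0_def Ps_def)
  have M: "Mmat N AL AR T n = Q * A0"
  proof -
    have e: "int n - 1 - int m = 0" using m by simp
    show ?thesis unfolding Mmat_def prodseq_tailprod[OF AL AR] Q_def A0_def
      by (subst (2) m) (simp only: tailprod.simps e)
  qed
  have M': "Mmat N AL AR (shift T 1) n = A0 * Q"
    unfolding Mmat_def prodseq_tailprod[OF AL AR] tailprod_shift1 Q_def A0_def
    by (subst (2) m) (simp only: tailprod_Suc_left[OF AL AR] per)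
  have P: "Pmat N AL AR T n = Ps + Q"
    unfolding Pmat_def Ps_def Q_def by (subst (2) m) simp
  have P': "Pmat N AL AR (shift T 1) n = 1\<^sub>m N + A0 * Ps"
    unfolding Pmat_def Psum_shift1 Ps_def A0_def
    by (subst (2) m) (simp only: Psum_Suc_left[OF AL AR] per)
  show ?thesis
  proof
    from ker obtain v where v: "v \<in> carrier_vec N" "v \<noteq> 0\<^sub>v N" "(1\<^sub>m N - Q * A0) *\<^sub>v v = 0\<^sub>v N"
      unfolding M by blast
    have vq: "v = Q *\<^sub>v (A0 *\<^sub>v v)"
    proof -
      have "v - (Q * A0) *\<^sub>v v = 0\<^sub>v N" using v c one_minus_mult_vec[of "Q * A0" N v] by simp
      then have "v = (Q * A0) *\<^sub>v v"
        using v c by (intro eq_vecI) (auto simp: vec_eq_iff)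
      then show ?thesis using c v by simp
    qed
    define w where "w = A0 *\<^sub>v v"
    have w: "w \<in> carrier_vec N" using c v by (simp add: w_def)
    have w0: "w \<noteq> 0\<^sub>v N"
    proof
      assume "w = 0\<^sub>v N"
      then have "v = 0\<^sub>v N" using vq mult_zero_vec_c[OF c(1)] by (simp add: w_def)
      then show False using v by simp
    qed
    have "(1\<^sub>m N - A0 * Q) *\<^sub>v w = w - A0 *\<^sub>v (Q *\<^sub>v w)"
      using one_minus_mult_vec[of "A0 * Q" N w] c w by simp
    also have "Q *\<^sub>v w = v" using vq by (simp add: w_def)
    also have "w - A0 *\<^sub>v v = 0\<^sub>v N" using w by (simp add: w_def)
    finally show "\<exists>v\<in>carrier_vec N. v \<noteq> 0\<^sub>v N \<and> (1\<^sub>m N - Mmat N AL AR (shift T 1) n) *\<^sub>v v = 0\<^sub>v N"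
      unfolding M' using w w0 by blast
  next
    show "\<forall>b\<in>carrier_vec N. \<exists>x\<in>carrier_vec N. (1\<^sub>m N - Mmat N AL AR (shift T 1) n) *\<^sub>v x = Pmat N AL AR (shift T 1) n *\<^sub>v b"
    proof
      fix b :: "real vec" assume b: "b \<in> carrier_vec N"
      from rng b obtain x where x: "x \<in> carrier_vec N" "(1\<^sub>m N - Q * A0) *\<^sub>v x = (Ps + Q) *\<^sub>v b"
        unfolding M P by blast
      define a where "a = Ps *\<^sub>v b"
      define cc where "cc = Q *\<^sub>v b"
      define d where "d = Q *\<^sub>v (A0 *\<^sub>v x)"
      have cv: "a \<in> carrier_vec N" "cc \<in> carrier_vec N" "d \<in> carrier_vec N"
        using c b x by (auto simp: a_def cc_def d_def)
      have "x - d = a + cc"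
        using x(2) one_minus_mult_vec[of "Q * A0" N x] c x b
        by (simp add: add_mult_distrib_mat_vec[of Ps N N Q b] a_def cc_def d_def)
      then have xe: "x = a + cc + d" using x cv by (intro eq_vecI) (auto simp: vec_eq_iff)
      have A0x: "A0 *\<^sub>v x = A0 *\<^sub>v a + A0 *\<^sub>v cc + A0 *\<^sub>v d"
      proof -
        have "A0 *\<^sub>v (a + cc + d) = A0 *\<^sub>v (a + cc) + A0 *\<^sub>v d"
          by (rule mult_add_distrib_mat_vec[OF c(2) add_carrier_vec[OF cv(1,2)] cv(3)])
        also have "A0 *\<^sub>v (a + cc) = A0 *\<^sub>v a + A0 *\<^sub>v cc"
          by (rule mult_add_distrib_mat_vec[OF c(2) cv(1,2)])
        finally show ?thesis unfolding xe .
      qed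
      define x' where "x' = A0 *\<^sub>v x + b"
      have x': "x' \<in> carrier_vec N" using c x b by (simp add: x'_def)
      have Qx': "Q *\<^sub>v x' = d + cc"
        using c x b by (simp add: x'_def d_def cc_def mult_add_distrib_mat_vec[of Q N N])
      have "(1\<^sub>m N - A0 * Q) *\<^sub>v x' = x' - A0 *\<^sub>v (Q *\<^sub>v x')"
        using one_minus_mult_vec[of "A0 * Q" N x'] c x' by simp
      also have "\<dots> = x' - (A0 *\<^sub>v d + A0 *\<^sub>v cc)"
        unfolding Qx' using c cv by (simp add: mult_add_distrib_mat_vec[of A0 N N])
      also have "\<dots> = b + A0 *\<^sub>v a"
        unfolding x'_def A0x using c cv b by (intro eq_vecI) auto
      also have "\<dots> = (1\<^sub>m N + A0 * Ps) *\<^sub>v b"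
        using c b by (simp add: add_mult_distrib_mat_vec[of "1\<^sub>m N" N N] a_def)
      finally show "\<exists>x\<in>carrier_vec N. (1\<^sub>m N - Mmat N AL AR (shift T 1) n) *\<^sub>v x = Pmat N AL AR (shift T 1) n *\<^sub>v b"
        unfolding M' P' using x' by blast
    qed
  qed
qed


lemma per_nat: "\<forall>j. S (j + int n) = S j \<Longrightarrow> S (x + int n * int q) = S x"
proof (induction q arbitrary: x)
  case (Suc q)
  have "S (x + int n * int (Suc q)) = S ((x + int n * int q) + int n)" by (simp add: algebra_simps)
  also have "\<dots> = S (x + int n * int q)" using Suc(2) by blast
  finally show ?case using Suc by simp
qed simp

lemma per_int: assumes "\<forall>j. S (j + int n) = S j" shows "S (x + int n * q) = S x"
proof (cases "q \<ge> 0")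
  case True
  then show ?thesis using per_nat[OF assms, of x "nat q"] by simp
next
  case False
  define p where "p = nat (- q)"
  have p: "q = - int p" using False by (simp add: p_def)
  have "S (x + int n * q) = S ((x + int n * q) + int n * int p)" using per_nat[OF assms] by simp
  also have "(x + int n * q) + int n * int p = x" by (simp add: p)
  finally show ?thesis .
qed

lemma shift_mod: assumes "\<forall>j. S (j + int n) = S j"
  shows "shift S i = shift S (i mod int n)"
proof
  fix j
  have "i + j = (i mod int n + j) + int n * (i div int n)" by (simp add: algebra_simps)
  then show "shift S i j = shift S (i mod int n) j"
    unfolding shift_def using per_int[OF assms] by metis
qed

theorem lemma4p10:
  fixes N n :: nat and AL AR :: "real mat" and C B :: "real vec" and mu :: real
    and S :: "int \<Rightarrow> side"
  assumes "N \<ge> 2"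
    and "AL \<in> carrier_mat N N" and "C \<in> carrier_vec N" and "B \<in> carrier_vec N"
    and "AR = AL + mat N N (\<lambda>(i, j). if j = 0 then C $ i else 0)"
    and "n \<ge> 1" and "\<forall>j. S (j + int n) = S j"
    and "det (1\<^sub>m N - Mmat N AL AR (flip0 n S) n) \<noteq> 0"
    and "det (1\<^sub>m N - Mmat N AL AR S n) = 0"
    and "det (Pmat N AL AR S n) = 0"
    and "mu \<noteq> 0"
    and "(transpose_mat (adj_mat (1\<^sub>m N - AL)) *\<^sub>v unit_vec N 0) \<bullet> B \<noteq> 0"
  shows "\<forall>i::int. det (Pmat N AL AR (shift S i) n) = 0"
proof -
  note AL = assms(2)
  have AR: "AR \<in> carrier_mat N N" using assms(2,5) by simp
  note per = assms(7)
  have ag: "agree N AL (Amat AL AR s)" for s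
    using agree_Amat[OF AL assms(5), of L s] by (simp add: Amat_def)
  obtain m where m: "n = Suc m" using assms(6) by (cases n) auto
  define Q where "Q = tailprod N AL AR S n m"
  have Qc: "Q \<in> carrier_mat N N" using AL AR by (simp add: Q_def)
  have e: "int n - 1 - int m = 0" using m by simp
  have MS: "Mmat N AL AR S n = Q * Amat AL AR (S 0)"
    unfolding Mmat_def prodseq_tailprod[OF AL AR] Q_def
    by (subst (2) m) (simp only: tailprod.simps e)
  have "tailprod N AL AR (flip0 n S) n m = Q"
    unfolding Q_def
  proof (rule tailprod_cong)
    fix i assume i: "i < m"
    have "(int n - 1 - int i) mod int n = int n - 1 - int i"
      using i m by (intro mod_pos_pos_trivial) auto
    moreover have "int n - 1 - int i \<noteq> 0" using i m by simp
    ultimately show "flip0 n S (int n - 1 - int i) = S (int n - 1 - int i)"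
      unfolding flip0_def by simp
  qed
  then have MF: "Mmat N AL AR (flip0 n S) n = Q * Amat AL AR (other (S 0))"
    unfolding Mmat_def prodseq_tailprod[OF AL AR]
    by (subst (2) m) (simp only: tailprod.simps e, simp add: flip0_def)
  have agK: "agree N (1\<^sub>m N - Mmat N AL AR S n) (1\<^sub>m N - Mmat N AL AR (flip0 n S) n)"
    unfolding MS MF using Qc AL AR
    by (intro agree_one_minus agree_mult) (auto intro: agree_trans[OF agree_sym[OF ag] ag])
  have agP: "agree N (Pmat N AL AR S n * (1\<^sub>m N - AL)) (1\<^sub>m N - Mmat N AL AR S n)"
    unfolding Pmat_def Mmat_def prodseq_tailprod[OF AL AR] using telescope[OF AL AR ag] .
  have rng0: "\<forall>b\<in>carrier_vec N. \<exists>x\<in>carrier_vec N. (1\<^sub>m N - Mmat N AL AR S n) *\<^sub>v x = Pmat N AL AR S n *\<^sub>v b"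
    by (rule base_range[OF _ _ _ _ _ agK assms(8) assms(10) agP]) (use AL AR assms(1) in auto)
  have ker0: "\<exists>v\<in>carrier_vec N. v \<noteq> 0\<^sub>v N \<and> (1\<^sub>m N - Mmat N AL AR S n) *\<^sub>v v = 0\<^sub>v N"
    using det_0_iff_vec_prod_zero[of "1\<^sub>m N - Mmat N AL AR S n" N] assms(9) AL AR by auto
  have inv: "(\<exists>v\<in>carrier_vec N. v \<noteq> 0\<^sub>v N \<and> (1\<^sub>m N - Mmat N AL AR (shift S (int k)) n) *\<^sub>v v = 0\<^sub>v N)
    \<and> (\<forall>b\<in>carrier_vec N. \<exists>x\<in>carrier_vec N. (1\<^sub>m N - Mmat N AL AR (shift S (int k)) n) *\<^sub>v x = Pmat N AL AR (shift S (int k)) n *\<^sub>v b)" for k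
  proof (induction k)
    case 0
    have "shift S (int 0) = S" by (simp add: shift_def)
    then show ?case using ker0 rng0 by simp
  next
    case (Suc k)
    have sh: "shift (shift S (int k)) 1 = shift S (int (Suc k))" by (auto simp: shift_def algebra_simps)
    have pp: "shift S (int k) (int n) = shift S (int k) 0"
      using per[rule_format, of "int k"] by (simp add: shift_def add.commute)
    show ?case using shift_step[OF AL AR assms(6) pp] Suc unfolding sh by blast
  qed
  show ?thesis
  proof
    fix i :: int
    have nn: "int (nat (i mod int n)) = i mod int n" using assms(6) by simp
    have sh: "shift S i = shift S (int (nat (i mod int n)))"
      unfolding nn by (rule shift_mod[OF per])
    show "det (Pmat N AL AR (shift S i) n) = 0"
      unfolding sh
      by (rule final_det[OF one_minus_carrier[OF Mmat_carrier[OF AL AR]] Pmat_carrier[OF AL AR]])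
        (use inv[of "nat (i mod int n)"] in blast)+
  qed
qed

end
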